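(* Let $x$ be a dyadic rational with $x\ge 0$. Then there exists a tower $T$ with $T=x$ such that every story $S$ of $T$ satisfies $S\ge 0$.
   Context: Games are short normal-play combinatorial games with the usual disjunctive sum $+$ and order/equality of values. Canonical integers: $0\cong\{\mid\}$, $n\cong\{n-1\mid\}$ for $n>0$, $n\cong\{\mid n+1\}$ for $n<0$. The ordinal sum is $G\mathbin{:}H\cong\{L(G),\,G\mathbin{:}L(H)\mid R(G),\,G\mathbin{:}R(H)\}$ (it is associative), and $\bigodot_{i=1}^n G_i$ denotes $G_1\mathbin{:}G_2\mathbin{:}\cdots\mathbin{:}G_n$. A tower is a game $T=\bigodot_{i=1}^n(b_i+r_i)$ where each $b_i$ is a non-negative integer in canonical form and each $r_i$ is a non-positive integer in canonical form; each $b_i+r_i$ is called a story of $T$. *)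

theory Defs
  imports Complex_Main
begin

datatype game = Game "game list" "game list"

fun lopts :: "game \<Rightarrow> game list" where "lopts (Game L R) = L"
fun ropts :: "game \<Rightarrow> game list" where "ropts (Game L R) = R"

lemma size_mem_lt: "x \<in> set xs \<Longrightarrow> size x < Suc (size_list size xs + n)"
  by (induction xs) auto

lemma size_mem_lt2: "x \<in> set xs \<Longrightarrow> size x < Suc (n + size_list size xs)"
  by (induction xs) auto

function game_le :: "game \<Rightarrow> game \<Rightarrow> bool" where
  "game_le (Game GL GR) (Game HL HR) =
     ((\<forall>gl\<in>set GL. \<not> game_le (Game HL HR) gl) \<and>
      (\<forall>hr\<in>set HR. \<not> game_le hr (Game GL GR)))"
  by pat_completeness auto
termination
  by (relation "measure (\<lambda>(g, h). size g + size h)")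
     (auto dest: size_mem_lt size_mem_lt2)

definition game_eq :: "game \<Rightarrow> game \<Rightarrow> bool" where
  "game_eq G H \<longleftrightarrow> game_le G H \<and> game_le H G"

function game_plus :: "game \<Rightarrow> game \<Rightarrow> game" where
  "game_plus (Game GL GR) (Game HL HR) =
     Game (map (\<lambda>gl. game_plus gl (Game HL HR)) GL @ map (\<lambda>hl. game_plus (Game GL GR) hl) HL)
          (map (\<lambda>gr. game_plus gr (Game HL HR)) GR @ map (\<lambda>hr. game_plus (Game GL GR) hr) HR)"
  by pat_completeness auto
termination
  by (relation "measure (\<lambda>(g, h). size g + size h)")
     (auto dest: size_mem_lt size_mem_lt2)

fun ord_sum :: "game \<Rightarrow> game \<Rightarrow> game" where
  "ord_sum G (Game HL HR) =
     Game (lopts G @ map (ord_sum G) HL) (ropts G @ map (ord_sum G) HR)"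

definition zero_game :: game where "zero_game = Game [] []"

function int_game :: "int \<Rightarrow> game" where
  "int_game n = (if n = 0 then Game [] []
                 else if n > 0 then Game [int_game (n - 1)] []
                 else Game [] [int_game (n + 1)])"
  by auto
termination by (relation "measure (\<lambda>n. nat \<bar>n\<bar>)") auto

text \<open>Canonical form of the dyadic rational m / 2^k.\<close>
fun dyadic_game :: "int \<Rightarrow> nat \<Rightarrow> game" where
  "dyadic_game m 0 = int_game m"
| "dyadic_game m (Suc k) =
     (if even m then dyadic_game (m div 2) k
      else Game [dyadic_game ((m - 1) div 2) k] [dyadic_game ((m + 1) div 2) k])"

text \<open>A story b + r, given by (b, r') with b = b and r = -r' (b, r' \<ge> 0).\<close>
definition story :: "nat \<times> nat \<Rightarrow> game" where
  "story s = game_plus (int_game (int (fst s))) (int_game (- int (snd s)))"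

text \<open>The tower S_1 : S_2 : ... : S_n (n \<ge> 1), ordinal sum associated to the right
(ordinal sum is associative).\<close>
fun ord_sum_list :: "game list \<Rightarrow> game" where
  "ord_sum_list [] = zero_game"
| "ord_sum_list [G] = G"
| "ord_sum_list (G # Gs) = ord_sum G (ord_sum_list Gs)"

definition tower :: "(nat \<times> nat) list \<Rightarrow> game" where
  "tower ss = ord_sum_list (map story ss)"

end

theory Submission
  imports Defs
begin




abbreviation dg where "dg \<equiv> dyadic_game"

lemma le_iff: "game_le G H \<longleftrightarrow> (\<forall>gl\<in>set (lopts G). \<not> game_le H gl) \<and> (\<forall>hr\<in>set (ropts H). \<not> game_le hr G)"
  by (cases G; cases H) simp

lemma lsize: "l \<in> set (lopts G) \<Longrightarrow> size l < size G"
  by (cases G) (auto dest: size_mem_lt)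

lemma rsize: "l \<in> set (ropts G) \<Longrightarrow> size l < size G"
  by (cases G) (auto dest: size_mem_lt2)

lemma le_refl: "game_le G G"
proof (induction G)
  case (Game L R)
  show ?case
  proof (subst le_iff, intro conjI ballI notI)
    fix gl assume gl: "gl \<in> set (lopts (Game L R))" and h: "game_le (Game L R) gl"
    show False using le_iff[of "Game L R" gl] gl h Game(1)[of gl] by auto
  next
    fix gr assume gr: "gr \<in> set (ropts (Game L R))" and h: "game_le gr (Game L R)"
    show False using le_iff[of gr "Game L R"] gr h Game(2)[of gr] by auto
  qed
qed

lemma lopt_lt: "gl \<in> set (lopts G) \<Longrightarrow> \<not> game_le G gl"
  using le_iff[of G gl] le_refl[of gl] by auto

lemma ropt_lt: "gr \<in> set (ropts G) \<Longrightarrow> \<not> game_le gr G"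
  using le_iff[of gr G] le_refl[of gr] by auto

lemma le_trans_aux: "size A + size B + size C = n \<Longrightarrow> game_le A B \<Longrightarrow> game_le B C \<Longrightarrow> game_le A C"
proof (induction n arbitrary: A B C rule: less_induct)
  case (less n)
  show ?case unfolding le_iff[of A C]
  proof (intro conjI ballI notI)
    fix al assume al: "al \<in> set (lopts A)" and h: "game_le C al"
    have "game_le B al" using less.IH[of "size B + size C + size al" B C al] lsize[OF al] less.prems h by auto
    moreover have "\<not> game_le B al" using less.prems(2) al unfolding le_iff[of A B] by auto
    ultimately show False by simp
  next
    fix cr assume cr: "cr \<in> set (ropts C)" and h: "game_le cr A"
    have "game_le cr B" using less.IH[of "size cr + size A + size B" cr A B] rsize[OF cr] less.prems h by auto
    moreover have "\<not> game_le cr B" using less.prems(3) cr unfolding le_iff[of B C] by auto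
    ultimately show False by simp
  qed
qed

lemma le_trans: "game_le A B \<Longrightarrow> game_le B C \<Longrightarrow> game_le A C"
  using le_trans_aux by blast

lemma eq_refl: "game_eq G G" by (simp add: game_eq_def le_refl)
lemma eq_sym: "game_eq G H \<Longrightarrow> game_eq H G" by (simp add: game_eq_def)
lemma eq_trans: "game_eq G H \<Longrightarrow> game_eq H K \<Longrightarrow> game_eq G K"
  unfolding game_eq_def using le_trans by blast

lemma lopts_os: "lopts (ord_sum S H) = lopts S @ map (ord_sum S) (lopts H)" by (cases H) simp
lemma ropts_os: "ropts (ord_sum S H) = ropts S @ map (ord_sum S) (ropts H)" by (cases H) simp

lemma colon_aux: "size H + size H' = n \<Longrightarrow> game_le (ord_sum S H) (ord_sum S H') \<longleftrightarrow> game_le H H'"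
proof (induction n arbitrary: H H' rule: less_induct)
  case (less n)
  have A: "\<forall>x\<in>set (lopts S). \<not> game_le (ord_sum S H') x" using lopt_lt[of _ "ord_sum S H'"] lopts_os by auto
  have B: "\<forall>y\<in>set (ropts S). \<not> game_le y (ord_sum S H)" using ropt_lt[of _ "ord_sum S H"] ropts_os by auto
  have C: "game_le (ord_sum S H') (ord_sum S hl) \<longleftrightarrow> game_le H' hl" if "hl \<in> set (lopts H)" for hl
  proof -
    have "size H' + size hl < n" using lsize[OF that] less.prems by simp
    then show ?thesis using less.IH by blast
  qed
  have D: "game_le (ord_sum S hr) (ord_sum S H) \<longleftrightarrow> game_le hr H" if "hr \<in> set (ropts H')" for hr
  proof -
    have "size hr + size H < n" using rsize[OF that] less.prems by simp
    then show ?thesis using less.IH by blast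
  qed
  show ?case unfolding le_iff[of "ord_sum S H"] le_iff[of H H'] lopts_os ropts_os
    using A B C D by auto
qed

lemma colon_eq: "game_eq H H' \<Longrightarrow> game_eq (ord_sum S H) (ord_sum S H')"
  unfolding game_eq_def using colon_aux by blast

lemma gen_recog:
  assumes "\<forall>l\<in>set (lopts G). \<not> game_le D l" "\<forall>r\<in>set (ropts G). \<not> game_le r D"
    "\<forall>l'\<in>set (lopts D). \<exists>l\<in>set (lopts G). game_le l' l"
    "\<forall>r'\<in>set (ropts D). \<exists>r\<in>set (ropts G). game_le r r'"
  shows "game_eq G D"
  unfolding game_eq_def le_iff[of G D] le_iff[of D G]
  using assms le_trans lopt_lt ropt_lt by meson



definition dv :: "int \<Rightarrow> nat \<Rightarrow> rat" where "dv m k = of_int m / 2 ^ k"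

lemma dg_norm: "\<exists>p q. dg m k = dg p q \<and> dv p q = dv m k \<and> q \<le> k \<and> (q = 0 \<or> odd p)"
proof (induction k arbitrary: m)
  case 0 then show ?case by blast
next
  case (Suc k)
  show ?case
  proof (cases "even m")
    case True
    obtain p q where pq: "dg (m div 2) k = dg p q" "dv p q = dv (m div 2) k" "q \<le> k" "q=0 \<or> odd p"
      using Suc.IH by blast
    moreover have "dv (m div 2) k = dv m (Suc k)" using True unfolding dv_def
      by (auto elim!: evenE simp: field_simps)
    ultimately show ?thesis using True by (metis dyadic_game.simps(2) le_SucI)
  next
    case False then show ?thesis by blast
  qed
qed

lemma int_game_0: "int_game 0 = Game [] []" by (subst int_game.simps) simp
lemma int_game_pos: "n > 0 \<Longrightarrow> int_game n = Game [int_game (n-1)] []" by (subst int_game.simps) simp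
lemma int_game_neg: "n < 0 \<Longrightarrow> int_game n = Game [] [int_game (n+1)]" by (subst int_game.simps) simp

definition LO :: "int \<Rightarrow> nat \<Rightarrow> (int \<times> nat) list" where
 "LO p q = (if q = 0 then (if p > 0 then [(p-1,0)] else []) else [((p-1) div 2, q-1)])"
definition RO :: "int \<Rightarrow> nat \<Rightarrow> (int \<times> nat) list" where
 "RO p q = (if q = 0 then (if p < 0 then [(p+1,0)] else []) else [((p+1) div 2, q-1)])"

lemma dg_opts: assumes "q = 0 \<or> odd p" shows
  "dg p q = Game (map (\<lambda>(a,j). dg a j) (LO p q)) (map (\<lambda>(a,j). dg a j) (RO p q))"
proof (cases q)
  case 0
  then show ?thesis
    by (cases "p > 0"; cases "p < 0") (auto simp: LO_def RO_def int_game_0 int_game_pos int_game_neg)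
next
  case (Suc q')
  then show ?thesis using assms by (auto simp: LO_def RO_def)
qed

lemma LO_val: "q = 0 \<or> odd p \<Longrightarrow> (a,j) \<in> set (LO p q) \<Longrightarrow>
   dv a j = (if q = 0 then dv p q - 1 else dv p q - 1/2^q)"
  by (cases q) (auto simp: LO_def dv_def split: if_splits elim!: oddE simp: field_simps)

lemma RO_val: "q = 0 \<or> odd p \<Longrightarrow> (a,j) \<in> set (RO p q) \<Longrightarrow>
   dv a j = (if q = 0 then dv p q + 1 else dv p q + 1/2^q)"
  by (cases q) (auto simp: RO_def dv_def split: if_splits elim!: oddE simp: field_simps)

lemma dv_shift: "dv (a * 2^d) (j+d) = dv a j"
  by (simp add: dv_def power_add)
lemma dv_less: "dv u K < dv v K \<longleftrightarrow> u < v" by (simp add: dv_def divide_less_cancel)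
lemma dv_le: "dv u K \<le> dv v K \<longleftrightarrow> u \<le> v" by (simp add: dv_def divide_le_cancel)
lemma dv_plus: "dv u K + 1/2^K = dv (u+1) K" by (simp add: dv_def add_divide_distrib)
lemma dv_minus: "dv u K - 1/2^K = dv (u-1) K" by (simp add: dv_def diff_divide_distrib)
lemma dv_0: "dv u 0 = of_int u" by (simp add: dv_def)

lemma core:
  fixes p p' :: int and q q' :: nat
  shows "dv p q \<le> dv p' q' \<longleftrightarrow>
   (if q = 0 then (p > 0 \<longrightarrow> dv p q - 1 < dv p' q') else dv p q - 1/2^q < dv p' q') \<and>
   (if q' = 0 then (p' < 0 \<longrightarrow> dv p q < dv p' q' + 1) else dv p q < dv p' q' + 1/2^q')"
  (is "?a \<longleftrightarrow> ?b")
proof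
  assume a: ?a
  have "(0::rat) < 1/2^q" "(0::rat) < 1/2^q'" by simp_all
  then have "dv p q - 1/2^q < dv p' q'" "dv p q < dv p' q' + 1/2^q'" "dv p q - 1 < dv p' q'" "dv p q < dv p' q' + 1"
    using a by linarith+
  then show ?b unfolding if_bool_eq_conj by blast
next
  assume b: ?b
  show ?a
  proof (rule ccontr)
    assume "\<not> ?a"
    hence yx: "dv p' q' < dv p q" by simp
    consider "q' > 0" "q \<le> q'" | "q > 0" "q' \<le> q" | "q = 0" "q' = 0" by linarith
    then show False
    proof cases
      case 1
      define d where "d = q' - q"
      have e: "dv p q = dv (p * 2^d) q'" using dv_shift[of p d q] 1 d_def by simp
      have "dv (p*2^d) q' < dv (p'+1) q'" using b 1 e dv_plus[of p' q'] by simp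
      moreover have "dv p' q' < dv (p*2^d) q'" using yx e by simp
      ultimately show False unfolding dv_less by linarith
    next
      case 2
      define d where "d = q - q'"
      have e: "dv p' q' = dv (p' * 2^d) q" using dv_shift[of p' d q'] 2 d_def by simp
      have "dv (p-1) q < dv (p'*2^d) q" using b 2 e dv_minus[of p q] by simp
      moreover have "dv (p'*2^d) q < dv p q" using yx e by simp
      ultimately show False unfolding dv_less by linarith
    next
      case 3
      then have "p' < p" using yx by (simp add: dv_0)
      then show False using b 3 by (cases "p > 0") (auto simp: dv_0)
    qed
  qed
qed

lemma LOcond: "q = 0 \<or> odd p \<Longrightarrow> (\<forall>(a,j)\<in>set (LO p q). P (dv a j)) \<longleftrightarrow>
   (if q = 0 then (p > 0 \<longrightarrow> P (dv p q - 1)) else P (dv p q - 1/2^q))"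
  using LO_val[of q p] by (auto simp: LO_def)

lemma ROcond: "q = 0 \<or> odd p \<Longrightarrow> (\<forall>(a,j)\<in>set (RO p q). P (dv a j)) \<longleftrightarrow>
   (if q = 0 then (p < 0 \<longrightarrow> P (dv p q + 1)) else P (dv p q + 1/2^q))"
  using RO_val[of q p] by (auto simp: RO_def)

lemma dg_le: "game_le (dg m k) (dg m' k') \<longleftrightarrow> dv m k \<le> dv m' k'"
proof (induction "size (dg m k) + size (dg m' k')" arbitrary: m k m' k' rule: less_induct)
  case less
  obtain p q where pq: "dg m k = dg p q" "dv p q = dv m k" "q=0 \<or> odd p" using dg_norm by blast
  obtain p' q' where pq': "dg m' k' = dg p' q'" "dv p' q' = dv m' k'" "q'=0 \<or> odd p'" using dg_norm by blast
  have L: "(\<forall>gl\<in>set (lopts (dg p q)). \<not> game_le (dg p' q') gl) \<longleftrightarrow> (\<forall>(a,j)\<in>set (LO p q). dv a j < dv p' q')"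
  proof -
    have "(\<not> game_le (dg p' q') (dg a j)) \<longleftrightarrow> dv a j < dv p' q'" if aj: "(a,j) \<in> set (LO p q)" for a j
    proof -
      have "dg a j \<in> set (lopts (dg p q))" using aj by (subst dg_opts[OF pq(3)]) force
      hence "size (dg a j) < size (dg m k)" using lsize pq by metis
      hence "game_le (dg p' q') (dg a j) \<longleftrightarrow> dv p' q' \<le> dv a j" using less[of p' q' a j] pq' by simp
      thus ?thesis by auto
    qed
    then show ?thesis by (subst dg_opts[OF pq(3)]) force
  qed
  have R: "(\<forall>hr\<in>set (ropts (dg p' q')). \<not> game_le hr (dg p q)) \<longleftrightarrow> (\<forall>(a,j)\<in>set (RO p' q'). dv p q < dv a j)"
  proof -
    have "(\<not> game_le (dg a j) (dg p q)) \<longleftrightarrow> dv p q < dv a j" if aj: "(a,j) \<in> set (RO p' q')" for a j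
    proof -
      have "dg a j \<in> set (ropts (dg p' q'))" using aj by (subst dg_opts[OF pq'(3)]) force
      hence "size (dg a j) < size (dg m' k')" using rsize pq' by metis
      hence "game_le (dg a j) (dg p q) \<longleftrightarrow> dv a j \<le> dv p q" using less[of a j p q] pq by simp
      thus ?thesis by auto
    qed
    then show ?thesis by (subst dg_opts[OF pq'(3)]) force
  qed
  have "game_le (dg p q) (dg p' q') \<longleftrightarrow> (\<forall>gl\<in>set (lopts (dg p q)). \<not> game_le (dg p' q') gl) \<and> (\<forall>hr\<in>set (ropts (dg p' q')). \<not> game_le hr (dg p q))"
    by (rule le_iff)
  also have "\<dots> \<longleftrightarrow> (\<forall>(a,j)\<in>set (LO p q). dv a j < dv p' q') \<and> (\<forall>(a,j)\<in>set (RO p' q'). dv p q < dv a j)"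
    using L R by simp
  also have "\<dots> \<longleftrightarrow> dv p q \<le> dv p' q'"
    unfolding LOcond[OF pq(3), of "\<lambda>v. v < dv p' q'"] ROcond[OF pq'(3), of "\<lambda>v. dv p q < v"]
    using core[of p q p' q'] by simp
  finally have "game_le (dg p q) (dg p' q') \<longleftrightarrow> dv p q \<le> dv p' q'" .
  then show ?case using pq pq' by simp
qed



definition isv :: "game \<Rightarrow> rat \<Rightarrow> bool" where
  "isv G v \<longleftrightarrow> (\<exists>a j. game_eq G (dg a j) \<and> v = dv a j)"

lemma isv_dg: "isv (dg a j) (dv a j)" unfolding isv_def using eq_refl by blast

lemma isv_le: "isv G v \<Longrightarrow> isv H w \<Longrightarrow> game_le G H \<longleftrightarrow> v \<le> w"
  unfolding isv_def game_eq_def using le_trans dg_le by metis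

lemma isv_eq: "game_eq G H \<Longrightarrow> isv H v \<Longrightarrow> isv G v"
  unfolding isv_def using eq_trans by blast

lemma isv_game_eq: "isv G (dv m k) \<Longrightarrow> game_eq G (dg m k)"
  by (metis isv_def isv_dg isv_le game_eq_def order_refl)

lemma recog:
  assumes L: "\<forall>l\<in>set (lopts G). \<exists>v. isv l v \<and> v < x"
  and R: "\<forall>r\<in>set (ropts G). \<exists>v. isv r v \<and> x < v"
  and x: "x = dv M K"
  and L0: "K = 0 \<Longrightarrow> x > 0 \<Longrightarrow> \<exists>l\<in>set (lopts G). \<exists>v. isv l v \<and> x - 1 \<le> v"
  and R0: "K = 0 \<Longrightarrow> x < 0 \<Longrightarrow> \<exists>r\<in>set (ropts G). \<exists>v. isv r v \<and> v \<le> x + 1"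
  and L1: "K > 0 \<Longrightarrow> \<exists>l\<in>set (lopts G). \<exists>v. isv l v \<and> x - 1/2^K \<le> v"
  and R1: "K > 0 \<Longrightarrow> \<exists>r\<in>set (ropts G). \<exists>v. isv r v \<and> v \<le> x + 1/2^K"
  shows "isv G x"
proof -
  obtain p q where pq: "dg M K = dg p q" "dv p q = dv M K" "q \<le> K" "q = 0 \<or> odd p"
    using dg_norm by blast
  have xq: "dv p q = x" using pq(2) x by simp
  have xd: "isv (dg p q) x" using pq(2) x isv_dg[of p q] by simp
  have pw: "(1::rat)/2^K \<le> 1/2^q" by (rule frac_le) (simp_all add: pq(3) power_increasing)
  have pw1: "(1::rat)/2^K \<le> 1" by simp
  have "game_eq G (dg p q)"
  proof (rule gen_recog)
    show "\<forall>l\<in>set (lopts G). \<not> game_le (dg p q) l" using L isv_le xd by (meson not_le)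
    show "\<forall>r\<in>set (ropts G). \<not> game_le r (dg p q)" using R isv_le xd by (meson not_le)
    show "\<forall>l'\<in>set (lopts (dg p q)). \<exists>l\<in>set (lopts G). game_le l' l"
    proof
      fix l' assume "l' \<in> set (lopts (dg p q))"
      then obtain a j where aj: "(a,j) \<in> set (LO p q)" "l' = dg a j"
        by (subst (asm) dg_opts[OF pq(4)]) auto
      have va: "dv a j = (if q = 0 then x - 1 else x - 1/2^q)"
        using LO_val[OF pq(4) aj(1)] unfolding xq .
      have "\<exists>l\<in>set (lopts G). \<exists>v. isv l v \<and> dv a j \<le> v"
      proof (cases "q = 0")
        case True
        then have "p > 0" using aj by (simp add: LO_def split: if_splits)
        hence "x > 0" using pq x True by (simp add: dv_0)
        show ?thesis
        proof (cases "K = 0")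
          case True then show ?thesis using L0 \<open>x > 0\<close> va \<open>q = 0\<close> by simp
        next
          case False
          then obtain l v where "l \<in> set (lopts G)" "isv l v" "x - 1/2^K \<le> v" using L1 by auto
          moreover have "dv a j \<le> x - 1/2^K" using va \<open>q = 0\<close> pw1 by simp
          ultimately show ?thesis by force
        qed
      next
        case False
        then have "K > 0" using pq(3) by simp
        then obtain l v where "l \<in> set (lopts G)" "isv l v" "x - 1/2^K \<le> v" using L1 by auto
        moreover have "dv a j \<le> x - 1/2^K" using va False pw by simp
        ultimately show ?thesis by force
      qed
      then show "\<exists>l\<in>set (lopts G). game_le l' l" using isv_le isv_dg aj by metis
    qed
    show "\<forall>r'\<in>set (ropts (dg p q)). \<exists>r\<in>set (ropts G). game_le r r'"
    proof
      fix r' assume "r' \<in> set (ropts (dg p q))"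
      then obtain a j where aj: "(a,j) \<in> set (RO p q)" "r' = dg a j"
        by (subst (asm) dg_opts[OF pq(4)]) auto
      have va: "dv a j = (if q = 0 then x + 1 else x + 1/2^q)"
        using RO_val[OF pq(4) aj(1)] unfolding xq .
      have "\<exists>r\<in>set (ropts G). \<exists>v. isv r v \<and> v \<le> dv a j"
      proof (cases "q = 0")
        case True
        then have "p < 0" using aj by (simp add: RO_def split: if_splits)
        hence "x < 0" using pq x True by (simp add: dv_0)
        show ?thesis
        proof (cases "K = 0")
          case True then show ?thesis using R0 \<open>x < 0\<close> va \<open>q = 0\<close> by simp
        next
          case False
          then obtain r v where "r \<in> set (ropts G)" "isv r v" "v \<le> x + 1/2^K" using R1 by auto
          moreover have "x + 1/2^K \<le> dv a j" using va \<open>q = 0\<close> pw1 by simp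
          ultimately show ?thesis by force
        qed
      next
        case False
        then have "K > 0" using pq(3) by simp
        then obtain r v where "r \<in> set (ropts G)" "isv r v" "v \<le> x + 1/2^K" using R1 by auto
        moreover have "x + 1/2^K \<le> dv a j" using va False pw by simp
        ultimately show ?thesis by force
      qed
      then show "\<exists>r\<in>set (ropts G). game_le r r'" using isv_le isv_dg aj by metis
    qed
  qed
  then show ?thesis using isv_eq xd by blast
qed



declare int_game.simps[simp del]

lemma plus_zero: "game_plus G (Game [] []) = G"
proof (induction G)
  case (Game L R)
  have "map (\<lambda>gl. game_plus gl (Game [] [])) L = L" using Game(1) by (simp add: map_idI)
  moreover have "map (\<lambda>gl. game_plus gl (Game [] [])) R = R" using Game(2) by (simp add: map_idI)
  ultimately show ?case by simp
qed

lemma story_b0: "story (b, 0) = int_game (int b)"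
  by (simp add: story_def int_game_0 plus_zero)

lemma int_game_m1: "int_game (-1) = Game [] [Game [] []]"
  by (simp add: int_game_neg int_game_0)

lemma story_01: "story (0, 1) = int_game (-1)"
  by (simp add: story_def int_game_0 int_game_m1 plus_zero)

lemma story_S1: "story (Suc b, 1) = Game [story (b, 1)] [int_game (int (Suc b))]"
proof -
  have i: "int_game (int (Suc b)) = Game [int_game (int b)] []" by (simp add: int_game_pos)
  show ?thesis unfolding story_def using i by (simp add: int_game_m1 plus_zero)
qed

lemma isv_int: "isv (int_game c) (of_int c)"
  using isv_dg[of c 0] by (simp add: dv_0)

lemma SL: "isv (story (b, 1)) (of_nat b - 1)"
proof (induction b)
  case 0
  show ?case unfolding story_01 using isv_int[of "-1"] by simp
next
  case (Suc b)
  have i: "isv (int_game (int (Suc b))) (of_nat b + 1)" using isv_int[of "int (Suc b)"] by (simp add: add.commute)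
  have x: "of_nat (Suc b) - 1 = dv (int b) 0" by (simp add: dv_0)
  show ?case unfolding story_S1
    apply (rule recog[where M = "int b" and K = 0, OF _ _ x])
    subgoal using Suc by (auto intro!: exI[of _ "of_nat b - 1"])
    subgoal using i by (auto intro!: exI[of _ "of_nat b + 1"])
    subgoal using Suc by (auto intro!: exI[of _ "of_nat b - 1"])
    subgoal by simp
    subgoal by simp
    subgoal by simp
    done
qed

lemma tower_single: "tower [s] = story s" by (simp add: tower_def)
lemma tower_cons: "ss \<noteq> [] \<Longrightarrow> tower (s # ss) = ord_sum (story s) (tower ss)"
  by (cases ss) (simp_all add: tower_def)

definition phi :: "rat \<Rightarrow> rat" where
  "phi z = (let n = nat \<lfloor>z\<rfloor> in 1 - 1/2^n + (z - of_nat n)/2^(n+1))"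

lemma phi_on: assumes "of_nat n \<le> w" "w \<le> of_nat n + 1"
  shows "phi w = 1 - 1/2^n + (w - of_nat n)/2^(n+1)"
proof (cases "w < of_nat n + 1")
  case True
  then have "\<lfloor>w\<rfloor> = int n" using assms by (simp add: floor_eq_iff)
  then show ?thesis by (simp add: phi_def)
next
  case False
  then have w: "w = of_nat n + 1" using assms by simp
  then have "\<lfloor>w\<rfloor> = int n + 1" by simp
  then have "nat \<lfloor>w\<rfloor> = Suc n" by simp
  then show ?thesis unfolding phi_def Let_def w by (simp add: field_simps)
qed

lemma phi_floor: assumes "0 \<le> w" shows "phi w = 1 - 1/2^(nat \<lfloor>w\<rfloor>) + (w - of_nat (nat \<lfloor>w\<rfloor>))/2^(nat \<lfloor>w\<rfloor>+1)"
  by (simp add: phi_def Let_def)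

lemma floor_props: assumes "0 \<le> w" shows "of_nat (nat \<lfloor>w\<rfloor>) \<le> w" "w < of_nat (nat \<lfloor>w\<rfloor>) + 1"
  using assms by (simp_all add: of_nat_nat) linarith

lemma phi_bounds: assumes "0 \<le> w" shows "0 \<le> phi w" "phi w < 1"
proof -
  define n where "n = nat \<lfloor>w\<rfloor>"
  have a: "of_nat n \<le> w" "w < of_nat n + 1" using floor_props[OF assms] n_def by auto
  have p: "phi w = 1 - 1/2^n + (w - of_nat n)/2^(n+1)" using phi_on a by simp
  have b: "(1::rat)/2^n \<le> 1" by simp
  have c: "(w - of_nat n)/2^(n+1) < 1/2^(n+1)" using a by (simp add: divide_strict_right_mono)
  have d: "(1::rat)/2^n = 2 * (1/2^(n+1))" by simp
  have e: "0 \<le> (w - of_nat n)/2^(n+1)" using a by simp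
  show "0 \<le> phi w" using p b e by linarith
  have "(0::rat) < 1/2^(n+1)" by simp
  then show "phi w < 1" using p c d by linarith
qed

lemma phi_mono: assumes "0 \<le> w" "w < w'" shows "phi w < phi w'"
proof -
  define n where "n = nat \<lfloor>w\<rfloor>"
  define n' where "n' = nat \<lfloor>w'\<rfloor>"
  have a: "of_nat n \<le> w" "w < of_nat n + 1" using floor_props[OF assms(1)] n_def by auto
  have a': "of_nat n' \<le> w'" "w' < of_nat n' + 1" using floor_props[of w'] assms n'_def by auto
  have p: "phi w = 1 - 1/2^n + (w - of_nat n)/2^(n+1)" using phi_on a by simp
  have p': "phi w' = 1 - 1/2^n' + (w' - of_nat n')/2^(n'+1)" using phi_on a' by simp
  have "n \<le> n'" using a a' assms unfolding n_def n'_def by (simp add: nat_mono floor_mono)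
  show ?thesis
  proof (cases "n = n'")
    case True
    then show ?thesis using p p' assms by (simp add: divide_strict_right_mono)
  next
    case False
    then have "n + 1 \<le> n'" using \<open>n \<le> n'\<close> by simp
    have c: "(w - of_nat n)/2^(n+1) < 1/2^(n+1)" using a by (simp add: divide_strict_right_mono)
    have d: "(1::rat)/2^n = 2 * (1/2^(n+1))" by simp
    have g: "(2::rat)^(n+1) \<le> 2^n'" using \<open>n + 1 \<le> n'\<close> by (intro power_increasing) auto
    have f: "(1::rat)/2^n' \<le> 1/2^(n+1)" by (rule frac_le[OF _ _ _ g]) simp_all
    have e: "0 \<le> (w' - of_nat n')/2^(n'+1)" using a' by simp
    show ?thesis using p p' c d e f by linarith
  qed
qed



lemma int_le_of: assumes "of_nat n \<le> (of_int p :: rat) / 2^q" shows "int n * 2^q \<le> p"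
proof -
  have "of_nat n * 2^q \<le> (of_int p :: rat)" using assms by (simp add: pos_le_divide_eq)
  then have "(of_int (int n * 2^q) :: rat) \<le> of_int p" by simp
  then show ?thesis by (simp only: of_int_le_iff)
qed

lemma int_less_of: assumes "(of_int p :: rat) / 2^q < of_nat n + 1" shows "p < (int n + 1) * 2^q"
proof -
  have "(of_int p :: rat) < (of_nat n + 1) * 2^q" using assms by (simp add: divide_less_eq)
  then have "(of_int p :: rat) < of_int ((int n + 1) * 2^q)" by simp
  then show ?thesis by (simp only: of_int_less_iff)
qed

lemma colon_main: "0 \<le> a \<Longrightarrow> isv (ord_sum (story (Suc b, 1)) (dg a j)) (of_nat b + phi (dv a j))"
proof (induction "size (dg a j)" arbitrary: a j rule: less_induct)
  case less
  define S where "S = story (Suc b, 1)"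
  obtain p q where pq: "dg a j = dg p q" "dv p q = dv a j" "q=0 \<or> odd p" using dg_norm by blast
  define z where "z = dv p q"
  define x where "x = of_nat b + phi z"
  have z0: "0 \<le> z" using less.prems pq z_def by (simp add: dv_def)
  have p0: "0 \<le> p"
  proof -
    have "(of_int p :: rat) = z * 2^q" using z_def by (simp add: dv_def)
    then have "(0::rat) \<le> of_int p" using z0 by simp
    then show ?thesis by simp
  qed
  have cpos: "0 \<le> c" if "(c,i) \<in> set (LO p q) \<union> set (RO p q)" for c i
    using that p0 pq(3) by (auto simp: LO_def RO_def split: if_splits elim!: oddE)
  have IH: "isv (ord_sum S (dg c i)) (of_nat b + phi (dv c i))" if "(c,i) \<in> set (LO p q) \<union> set (RO p q)" for c i
  proof -
    have "dg c i \<in> set (lopts (dg p q)) \<union> set (ropts (dg p q))" using that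
      by (subst (1 2) dg_opts[OF pq(3)]) force
    hence "size (dg c i) < size (dg a j)" using lsize rsize pq by (metis Un_iff)
    then show ?thesis using less.hyps cpos[OF that] S_def by blast
  qed
  have dvpos: "0 \<le> dv c i" if "(c,i) \<in> set (LO p q) \<union> set (RO p q)" for c i
    using cpos[OF that] by (simp add: dv_def)
  have lS: "lopts S = [story (b,1)]" "ropts S = [int_game (int (Suc b))]"
    unfolding S_def story_S1 by simp_all
  have LS: "set (lopts (ord_sum S (dg p q))) = insert (story (b,1)) ((\<lambda>(c,i). ord_sum S (dg c i)) ` set (LO p q))"
    by (subst dg_opts[OF pq(3)]) (auto simp: lS lopts_os image_iff split_def)
  have RS: "set (ropts (ord_sum S (dg p q))) = insert (int_game (int (Suc b))) ((\<lambda>(c,i). ord_sum S (dg c i)) ` set (RO p q))"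
    by (subst dg_opts[OF pq(3)]) (auto simp: lS ropts_os image_iff split_def)
  have ph: "0 \<le> phi z" "phi z < 1" using phi_bounds[OF z0] by auto
  have isvb: "isv (story (b,1)) (of_nat b - 1)" by (rule SL)
  have isvi: "isv (int_game (int (Suc b))) (of_nat b + 1)" using isv_int[of "int (Suc b)"] by (simp add: add.commute)
  have LV: "dv c i = (if q = 0 then z - 1 else z - 1/2^q)" if "(c,i) \<in> set (LO p q)" for c i
    using LO_val[OF pq(3) that] unfolding z_def .
  have RV: "dv c i = (if q = 0 then z + 1 else z + 1/2^q)" if "(c,i) \<in> set (RO p q)" for c i
    using RO_val[OF pq(3) that] unfolding z_def .
  have Lgood: "\<forall>l\<in>set (lopts (ord_sum S (dg p q))). \<exists>v. isv l v \<and> v < x"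
  proof
    fix l assume "l \<in> set (lopts (ord_sum S (dg p q)))"
    then consider "l = story (b,1)" | c i where "(c,i) \<in> set (LO p q)" "l = ord_sum S (dg c i)"
      unfolding LS by auto
    then show "\<exists>v. isv l v \<and> v < x"
    proof cases
      case 1 then show ?thesis using isvb ph x_def by (intro exI[of _ "of_nat b - 1"]) auto
    next
      case 2
      have "dv c i < z" using LV[OF 2(1)] by (simp split: if_splits)
      then have "phi (dv c i) < phi z" using phi_mono dvpos 2(1) by blast
      then show ?thesis using IH[of c i] 2 x_def by (intro exI[of _ "of_nat b + phi (dv c i)"]) auto
    qed
  qed
  have Rgood: "\<forall>r\<in>set (ropts (ord_sum S (dg p q))). \<exists>v. isv r v \<and> x < v"
  proof
    fix r assume "r \<in> set (ropts (ord_sum S (dg p q)))"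
    then consider "r = int_game (int (Suc b))" | c i where "(c,i) \<in> set (RO p q)" "r = ord_sum S (dg c i)"
      unfolding RS by auto
    then show "\<exists>v. isv r v \<and> x < v"
    proof cases
      case 1 then show ?thesis using isvi ph x_def by (intro exI[of _ "of_nat b + 1"]) auto
    next
      case 2
      have "z < dv c i" using RV[OF 2(1)] by (simp split: if_splits)
      then have "phi z < phi (dv c i)" using phi_mono z0 by blast
      then show ?thesis using IH[of c i] 2 x_def by (intro exI[of _ "of_nat b + phi (dv c i)"]) auto
    qed
  qed
  have "isv (ord_sum S (dg p q)) x"
  proof (cases "q = 0")
    case True
    define n where "n = nat p"
    have zn: "z = of_nat n" using True z_def n_def p0 by (simp add: dv_0)
    have phz: "phi z = 1 - 1/2^n" using phi_on[of n z] zn by simp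
    have xM: "x = dv ((int b + 1) * 2^n - 1) n" unfolding x_def phz dv_def by (simp add: field_simps)
    show ?thesis
    proof (rule recog[OF Lgood Rgood xM])
      assume "n = 0" "0 < x"
      then show "\<exists>l\<in>set (lopts (ord_sum S (dg p q))). \<exists>v. isv l v \<and> x - 1 \<le> v"
        unfolding LS using isvb x_def phz by auto
    next
      assume "n = 0" "x < 0" then show "\<exists>r\<in>set (ropts (ord_sum S (dg p q))). \<exists>v. isv r v \<and> v \<le> x + 1"
        using ph x_def by simp
    next
      assume n0: "0 < n"
      then have "p > 0" using n_def by simp
      then have lo: "(p - 1, 0) \<in> set (LO p q)" using True by (simp add: LO_def)
      have "dv (p-1) 0 = of_nat (n - 1)" using n0 n_def p0 by (simp add: dv_0 of_nat_diff)
      then have "phi (dv (p-1) 0) = 1 - 1/2^(n-1)" using phi_on[of "n-1" "of_nat (n-1)"] by simp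
      also have "\<dots> = phi z - 1/2^n" using n0 unfolding phz by (cases n) (simp_all add: field_simps)
      finally have "of_nat b + phi (dv (p-1) 0) = x - 1/2^n" using x_def by simp
      then show "\<exists>l\<in>set (lopts (ord_sum S (dg p q))). \<exists>v. isv l v \<and> x - 1/2^n \<le> v"
        unfolding LS using IH[of "p-1" 0] lo by force
    next
      assume n0: "0 < n"
      have "x + 1/2^n = of_nat b + 1" using x_def phz by simp
      then show "\<exists>r\<in>set (ropts (ord_sum S (dg p q))). \<exists>v. isv r v \<and> v \<le> x + 1/2^n"
        unfolding RS using isvi by force
    qed
  next
    case False
    then have op: "odd p" using pq(3) by simp
    define n where "n = nat \<lfloor>z\<rfloor>"
    have fl: "of_nat n \<le> z" "z < of_nat n + 1" using floor_props[OF z0] n_def by auto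
    have zd: "z = of_int p / 2^q" using z_def by (simp add: dv_def)
    have i1: "int n * 2^q \<le> p" using int_le_of fl(1) zd by simp
    have i2: "p < (int n + 1) * 2^q" using int_less_of fl(2) zd by simp
    have "even (int n * 2^q)" using False by simp
    then have "int n * 2^q \<noteq> p" using op by auto
    then have i1': "int n * 2^q \<le> p - 1" using i1 by simp
    have i2': "p + 1 \<le> (int n + 1) * 2^q" using i2 by simp
    define K where "K = n + 1 + q"
    have lo: "((p - 1) div 2, q - 1) \<in> set (LO p q)" using False by (simp add: LO_def)
    have ro: "((p + 1) div 2, q - 1) \<in> set (RO p q)" using False by (simp add: RO_def)
    have zl: "dv ((p - 1) div 2) (q - 1) = z - 1/2^q" using LV[OF lo] False by simp
    have zr: "dv ((p + 1) div 2) (q - 1) = z + 1/2^q" using RV[OF ro] False by simp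
    have a1: "of_nat n \<le> z - 1/2^q"
    proof -
      have "(of_int (int n * 2^q) :: rat) \<le> of_int (p - 1)" using i1' by (simp only: of_int_le_iff)
      then have "of_nat n * 2^q \<le> (of_int p - 1 :: rat)" by simp
      then show ?thesis unfolding zd by (simp add: pos_le_divide_eq diff_divide_distrib[symmetric])
    qed
    have a2: "z + 1/2^q \<le> of_nat n + 1"
    proof -
      have "(of_int (p + 1) :: rat) \<le> of_int ((int n + 1) * 2^q)" using i2' by (simp only: of_int_le_iff)
      then have "(of_int p + 1 :: rat) \<le> (of_nat n + 1) * 2^q" by simp
      then show ?thesis unfolding zd by (simp add: pos_divide_le_eq add_divide_distrib[symmetric])
    qed
    have pz: "phi z = 1 - 1/2^n + (z - of_nat n)/2^(n+1)" using phi_on fl by simp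
    have xM: "x = dv ((int b + 1) * 2^K - 2^(q+1) + p - int n * 2^q) K"
      unfolding x_def pz unfolding zd dv_def K_def
      by (simp add: field_simps power_add)
    have e0: "(0::rat) < 1/2^q" by simp
    have pl0: "phi (z - 1/2^q) = 1 - 1/2^n + (z - 1/2^q - of_nat n)/2^(n+1)"
      by (rule phi_on) (use a1 a2 e0 in linarith)+
    have pl: "phi (z - 1/2^q) = phi z - 1/2^K"
      unfolding pl0 pz K_def by (simp add: field_simps power_add)
    have pr0: "phi (z + 1/2^q) = 1 - 1/2^n + (z + 1/2^q - of_nat n)/2^(n+1)"
      by (rule phi_on) (use a1 a2 e0 in linarith)+
    have pr: "phi (z + 1/2^q) = phi z + 1/2^K"
      unfolding pr0 pz K_def by (simp add: field_simps power_add)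
    show ?thesis
    proof (rule recog[OF Lgood Rgood xM])
      show "\<exists>l\<in>set (lopts (ord_sum S (dg p q))). \<exists>v. isv l v \<and> x - 1/2^K \<le> v"
        unfolding LS using IH[of "(p - 1) div 2" "q - 1"] lo zl pl x_def by force
      show "\<exists>r\<in>set (ropts (ord_sum S (dg p q))). \<exists>v. isv r v \<and> v \<le> x + 1/2^K"
        unfolding RS using IH[of "(p + 1) div 2" "q - 1"] ro zr pr x_def by force
    qed (simp_all add: K_def)
  qed
  then show ?case using pq S_def x_def z_def by simp
qed



lemma find_n: "0 \<le> (y::rat) \<Longrightarrow> y < 1 - 1/2^N \<Longrightarrow> \<exists>n. 1 - 1/2^n \<le> y \<and> y < 1 - 1/2^(n+1)"
proof (induction N)
  case 0 then show ?case by simp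
next
  case (Suc N)
  show ?case
  proof (cases "y < 1 - 1/2^N")
    case True then show ?thesis using Suc by blast
  next
    case False then show ?thesis using Suc.prems by (intro exI[of _ N]) simp
  qed
qed

lemma intc: "\<exists>ss. ss \<noteq> [] \<and> isv (tower ss) (of_nat b) \<and> (\<forall>s\<in>set ss. game_le zero_game (story s))"
proof (intro exI[of _ "[(b,0)]"] conjI)
  show "isv (tower [(b, 0)]) (of_nat b)" using isv_int[of "int b"] by (simp add: tower_single story_b0)
  have "game_le zero_game (int_game (int b))"
    using isv_le[OF isv_int[of 0] isv_int[of "int b"]] by (simp add: zero_game_def int_game_0)
  then show "\<forall>s\<in>set [(b, 0)]. game_le zero_game (story s)" by (simp add: story_b0)
qed simp

lemma le_zero_S: "game_le zero_game (story (Suc b, 1))"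
  using isv_le[OF isv_int[of 0] SL[of "Suc b"]] by (simp add: zero_game_def int_game_0)

lemma main: "0 \<le> m \<Longrightarrow> \<exists>ss. ss \<noteq> [] \<and> isv (tower ss) (dv m k) \<and> (\<forall>s\<in>set ss. game_le zero_game (story s))"
proof (induction k arbitrary: m)
  case 0
  have "dv m 0 = of_nat (nat m)" using 0 by (simp add: dv_0)
  then show ?case using intc by simp
next
  case (Suc k)
  define x where "x = dv m (Suc k)"
  have x0: "0 \<le> x" using Suc.prems by (simp add: x_def dv_def)
  define b where "b = nat \<lfloor>x\<rfloor>"
  define y where "y = x - of_nat b"
  have y01: "0 \<le> y" "y < 1" using floor_props[OF x0] b_def y_def by auto
  show ?case
  proof (cases "y = 0")
    case True
    then have "dv m (Suc k) = of_nat b" using x_def y_def by simp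
    then show ?thesis using intc by simp
  next
    case False
    then have ypos: "0 < y" using y01 by simp
    define u where "u = m - int b * 2^(Suc k)"
    have yu: "y = dv u (Suc k)" unfolding y_def x_def u_def dv_def by (simp add: field_simps)
    have "u < 2^(Suc k)"
    proof -
      have "(of_int u :: rat) = y * 2^(Suc k)" using yu by (simp add: dv_def)
      also have "\<dots> < 2^(Suc k)" using y01 by simp
      finally have "(of_int u :: rat) < of_int (2^(Suc k))" by simp
      then show ?thesis by (simp only: of_int_less_iff)
    qed
    then have "u \<le> 2^(Suc k) - 1" by simp
    then have "(of_int u :: rat) \<le> of_int (2^(Suc k) - 1)" by (simp only: of_int_le_iff)
    then have "y \<le> 1 - 1/2^(Suc k)" using yu by (simp add: dv_def field_simps)
    moreover have "(1::rat)/2^(Suc (Suc k)) < 1/2^(Suc k)" by (rule divide_strict_left_mono) simp_all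
    ultimately have "y < 1 - 1/2^(Suc (Suc k))" by linarith
    then obtain n where n: "1 - 1/2^n \<le> y" "y < 1 - 1/2^(n+1)" using find_n y01 by blast
    define z where "z = of_nat n + (y - 1 + 1/2^n) * 2^(n+1)"
    define M' where "M' = int n * 2^k + u * 2^n - 2^(n+1) * 2^k + 2 * 2^k"
    have zM: "z = dv M' k" unfolding z_def M'_def yu dv_def by (simp add: field_simps power_add)
    have z1: "of_nat n \<le> z" using n(1) unfolding z_def by simp
    have z2: "z \<le> of_nat n + 1"
    proof -
      have "(y - 1 + 1/2^n) * 2^(n+1) < (1/2^n - 1/2^(n+1)) * 2^(n+1)"
        using n(2) by (intro mult_strict_right_mono) simp_all
      also have "\<dots> = 1" by (simp add: field_simps)
      finally show ?thesis unfolding z_def by simp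
    qed
    have phz: "phi z = y" using phi_on[OF z1 z2] unfolding z_def by (simp add: field_simps)
    have z0: "0 \<le> z" using z1 by (meson of_nat_0_le_iff order_trans)
    have M0: "0 \<le> M'"
    proof -
      have "(of_int M' :: rat) = z * 2^k" using zM by (simp add: dv_def)
      then have "(0::rat) \<le> of_int M'" using z0 by simp
      then show ?thesis by simp
    qed
    obtain ss' where ss': "ss' \<noteq> []" "isv (tower ss') (dv M' k)" "\<forall>s\<in>set ss'. game_le zero_game (story s)"
      using Suc.IH[OF M0] by blast
    obtain a j where aj: "game_eq (tower ss') (dg a j)" "dv M' k = dv a j"
      using ss'(2) unfolding isv_def by blast
    have a0: "0 \<le> a"
    proof -
      have "(of_int a :: rat) = z * 2^j" using zM aj(2) by (simp add: dv_def)
      then have "(0::rat) \<le> of_int a" using z0 by simp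
      then show ?thesis by simp
    qed
    have "isv (ord_sum (story (Suc b, 1)) (dg a j)) (of_nat b + phi z)"
      using colon_main[OF a0, of b] zM aj(2) by simp
    then have "isv (ord_sum (story (Suc b, 1)) (tower ss')) (dv m (Suc k))"
      using isv_eq[OF colon_eq[OF aj(1)]] phz x_def y_def by simp
    then show ?thesis using ss' le_zero_S tower_cons[OF ss'(1)]
      by (intro exI[of _ "(Suc b, 1) # ss'"]) auto
  qed
qed

theorem theorem3p4:
  fixes x :: rat and m :: int and k :: nat
  assumes "x = of_int m / 2 ^ k" and "x \<ge> 0"
  shows "\<exists>ss :: (nat \<times> nat) list. ss \<noteq> [] \<and>
           game_eq (tower ss) (dyadic_game m k) \<and>
           (\<forall>s\<in>set ss. game_le zero_game (story s))"
proof -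
  have "(of_int m :: rat) = x * 2^k" using assms(1) by simp
  then have "(0::rat) \<le> of_int m" using assms(2) by simp
  then have "0 \<le> m" by simp
  then obtain ss where "ss \<noteq> []" "isv (tower ss) (dv m k)" "\<forall>s\<in>set ss. game_le zero_game (story s)"
    using main by blast
  then show ?thesis using isv_game_eq by blast
qed

end
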